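(* Let $(X,r)$ be a non-degenerate involutive set-theoretic solution with $X=\{1,\dots,n\}$, $r(i,j)=(\sigma_i(j),\gamma_j(i))$, let $V$ be the vector space with basis $v_1,\dots,v_n$ and $c\in\mathrm{End}(V\otimes V)$ the operator $c(v_i\otimes v_j)=v_{\sigma_i(j)}\otimes v_{\gamma_j(i)}$. Then the algebra $A(c)$ is the quotient of the free algebra $F$ generated by $\{T_i^k: 1\le i,k\le n\}$ by the two-sided ideal $I(c)$ generated by all the elements $$C_{ij}^{kl}=T_{\sigma_i(j)}^{k}T_{\gamma_j(i)}^{l}-T_i^{\sigma_k(l)}T_j^{\gamma_l(k)},$$ and in particular $$C_{\sigma_i(j)\gamma_j(i)}^{kl}=T_i^kT_j^l-T_{\sigma_i(j)}^{\sigma_k(l)}T_{\gamma_j(i)}^{\gamma_l(k)}$$ (where $C_{\sigma_i(j)\gamma_j(i)}^{kl}$ denotes $C_{ab}^{kl}$ with $a=\sigma_i(j)$, $b=\gamma_j(i)$). Furthermore: (i) $C_{\sigma_i(j)\gamma_j(i)}^{\sigma_k(l)\gamma_l(k)}=-C_{ij}^{kl}$; (ii) $C_{ij}^{\sigma_k(l)\gamma_l(k)}=-C_{\sigma_i(j)\gamma_j(i)}^{kl}$; (iii) if $r(i,j)=(i,j)$, then $C_{ij}^{\sigma_k(l)\gamma_l(k)}=\pm C_{ij}^{kl}$; (iv) if $r(k,l)=(k,l)$, then $C_{\sigma_i(j)\gamma_j(i)}^{kl}=\pm C_{ij}^{kl}$; (v) if $r(i,j)=(i,j)$ and $r(k,l)=(k,l)$,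 then $C_{ij}^{kl}=0$; (vi) there are $\binom{n^2}{2}$ elements in the set $\{C_{ij}^{kl}\}/\pm$.
   Context: A set-theoretic solution of the Yang–Baxter equation is $r:X\times X\to X\times X$, $r(x,y)=(\sigma_x(y),\gamma_y(x))$, with $r^{12}r^{23}r^{12}=r^{23}r^{12}r^{23}$; non-degenerate means all $\sigma_x,\gamma_x$ bijective, involutive means $r\circ r=\mathrm{Id}$. FRT construction: for $c\in\mathrm{End}(V\otimes V)$ with coefficients defined by $c(v_i\otimes v_j)=\sum_{p,q}c_{ij}^{pq}v_p\otimes v_q$, the algebra $A(c)$ is defined as the quotient of the free algebra generated by $\{T_i^k:1\le i,k\le n\}$ by the two-sided ideal $I(c)$ generated by all elements $C_{ij}^{kl}=\sum_{p,q}c_{ij}^{pq}T_p^kT_q^l-\sum_{p,q}T_i^pT_j^q\,c_{pq}^{kl}$, with $i,j,k,l$ ranging over $\{1,\dots,n\}$. *)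

theory Defs
  imports Main "HOL-Library.Poly_Mapping"
begin

text \<open>r(x,y) = (sigma x y, gamma y x); here sigma x stands for sigma_x and gamma y for gamma_y.\<close>
definition sol_r :: "(nat \<Rightarrow> nat \<Rightarrow> nat) \<Rightarrow> (nat \<Rightarrow> nat \<Rightarrow> nat) \<Rightarrow> nat \<times> nat \<Rightarrow> nat \<times> nat" where
  "sol_r sigma gamma = (\<lambda>(x, y). (sigma x y, gamma y x))"

definition r12 :: "(nat \<times> nat \<Rightarrow> nat \<times> nat) \<Rightarrow> nat \<times> nat \<times> nat \<Rightarrow> nat \<times> nat \<times> nat" where
  "r12 r = (\<lambda>(x, y, z). (fst (r (x, y)), snd (r (x, y)), z))"

definition r23 :: "(nat \<times> nat \<Rightarrow> nat \<times> nat) \<Rightarrow> nat \<times> nat \<times> nat \<Rightarrow> nat \<times> nat \<times> nat" where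
  "r23 r = (\<lambda>(x, y, z). (x, fst (r (y, z)), snd (r (y, z))))"

definition nondeg_invol_solution :: "nat \<Rightarrow> (nat \<Rightarrow> nat \<Rightarrow> nat) \<Rightarrow> (nat \<Rightarrow> nat \<Rightarrow> nat) \<Rightarrow> bool" where
  "nondeg_invol_solution n sigma gamma \<longleftrightarrow>
     (\<forall>x\<in>{1..n}. bij_betw (sigma x) {1..n} {1..n} \<and> bij_betw (gamma x) {1..n} {1..n}) \<and>
     (\<forall>t\<in>{1..n} \<times> {1..n} \<times> {1..n}.
        (r12 (sol_r sigma gamma) \<circ> r23 (sol_r sigma gamma) \<circ> r12 (sol_r sigma gamma)) t =
        (r23 (sol_r sigma gamma) \<circ> r12 (sol_r sigma gamma) \<circ> r23 (sol_r sigma gamma)) t) \<and>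
     (\<forall>p\<in>{1..n} \<times> {1..n}. sol_r sigma gamma (sol_r sigma gamma p) = p)"

text \<open>Elements of the free (noncommutative) algebra generated by the T_i^k, encoded as
  finitely supported coefficient functions on words; the generator T_i^k is the letter (i,k).\<close>
type_synonym 'k free_alg = "(nat \<times> nat) list \<Rightarrow>\<^sub>0 'k"

definition fmult :: "'k::field free_alg \<Rightarrow> 'k free_alg \<Rightarrow> 'k free_alg" (infixl \<open>\<cdot>\<^sub>F\<close> 70) where
  "fmult p q = (\<Sum>u\<in>Poly_Mapping.keys p. \<Sum>v\<in>Poly_Mapping.keys q.
                  Poly_Mapping.single (u @ v) (Poly_Mapping.lookup p u * Poly_Mapping.lookup q v))"

definition fscal :: "'k::field \<Rightarrow> 'k free_alg \<Rightarrow> 'k free_alg" where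
  "fscal a p = Poly_Mapping.single [] a \<cdot>\<^sub>F p"

definition gen :: "nat \<Rightarrow> nat \<Rightarrow> 'k::field free_alg" (\<open>T\<close>) where
  "gen i k = Poly_Mapping.single [(i, k)] 1"

text \<open>Coefficients c_ij^pq of c(v_i \<otimes> v_j) = v_(sigma_i j) \<otimes> v_(gamma_j i).\<close>
definition ccoef :: "(nat \<Rightarrow> nat \<Rightarrow> nat) \<Rightarrow> (nat \<Rightarrow> nat \<Rightarrow> nat) \<Rightarrow> nat \<Rightarrow> nat \<Rightarrow> nat \<Rightarrow> nat \<Rightarrow> 'k::field" where
  "ccoef sigma gamma i j p q = (if p = sigma i j \<and> q = gamma j i then 1 else 0)"

definition FRT_C :: "nat \<Rightarrow> (nat \<Rightarrow> nat \<Rightarrow> nat \<Rightarrow> nat \<Rightarrow> 'k::field) \<Rightarrow> nat \<Rightarrow> nat \<Rightarrow> nat \<Rightarrow> nat \<Rightarrow> 'k free_alg" where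
  "FRT_C n c i j k l =
     (\<Sum>p\<in>{1..n}. \<Sum>q\<in>{1..n}. fscal (c i j p q) (T p k \<cdot>\<^sub>F T q l))
   - (\<Sum>p\<in>{1..n}. \<Sum>q\<in>{1..n}. fscal (c p q k l) (T i p \<cdot>\<^sub>F T j q))"

end

theory Submission
  imports Defs "HOL-Library.Product_Lexorder"
begin

lemma fmult_single: "Poly_Mapping.single u a \<cdot>\<^sub>F Poly_Mapping.single v b = Poly_Mapping.single (u @ v) (a * (b::'k::field))"
  unfolding fmult_def by (cases "a = 0"; cases "b = 0") auto

lemma T_mult: "(T a c \<cdot>\<^sub>F T b d :: 'k::field free_alg) = Poly_Mapping.single [(a,c),(b,d)] 1"
  unfolding gen_def by (simp add: fmult_single)

lemma fscal_single: "fscal c (Poly_Mapping.single w (1::'k::field)) = Poly_Mapping.single w c"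
  unfolding fscal_def by (simp add: fmult_single)

lemma sum_sum_delta:
  fixes f :: "nat \<Rightarrow> nat \<Rightarrow> 'a::comm_monoid_add"
  assumes "finite A" "finite B" "a \<in> A" "b \<in> B"
  shows "(\<Sum>p\<in>A. \<Sum>q\<in>B. if p = a \<and> q = b then f p q else 0) = f a b"
proof -
  have "(\<Sum>p\<in>A. \<Sum>q\<in>B. if p = a \<and> q = b then f p q else 0)
      = (\<Sum>p\<in>A. if p = a then (\<Sum>q\<in>B. if q = b then f p q else 0) else 0)"
    by (rule sum.cong) auto
  also have "\<dots> = f a b" using assms by (simp add: sum.delta')
  finally show ?thesis .
qed

theorem lemma3p1:
  fixes n :: nat and sigma gamma :: "nat \<Rightarrow> nat \<Rightarrow> nat"
  assumes sol: "nondeg_invol_solution n sigma gamma"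
  defines "C \<equiv> FRT_C n (ccoef sigma gamma :: nat \<Rightarrow> nat \<Rightarrow> nat \<Rightarrow> nat \<Rightarrow> 'k::field)"
  defines "X \<equiv> {1..n}"
  shows
    "(\<forall>i\<in>X. \<forall>j\<in>X. \<forall>k\<in>X. \<forall>l\<in>X.
        C i j k l = T (sigma i j) k \<cdot>\<^sub>F T (gamma j i) l - T i (sigma k l) \<cdot>\<^sub>F T j (gamma l k))
   \<and> (\<forall>i\<in>X. \<forall>j\<in>X. \<forall>k\<in>X. \<forall>l\<in>X.
        C (sigma i j) (gamma j i) k l
          = T i k \<cdot>\<^sub>F T j l - T (sigma i j) (sigma k l) \<cdot>\<^sub>F T (gamma j i) (gamma l k))
   \<and> (\<forall>i\<in>X. \<forall>j\<in>X. \<forall>k\<in>X. \<forall>l\<in>X.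
        C (sigma i j) (gamma j i) (sigma k l) (gamma l k) = - C i j k l)
   \<and> (\<forall>i\<in>X. \<forall>j\<in>X. \<forall>k\<in>X. \<forall>l\<in>X.
        C i j (sigma k l) (gamma l k) = - C (sigma i j) (gamma j i) k l)
   \<and> (\<forall>i\<in>X. \<forall>j\<in>X. \<forall>k\<in>X. \<forall>l\<in>X. sol_r sigma gamma (i, j) = (i, j) \<longrightarrow>
        C i j (sigma k l) (gamma l k) = C i j k l \<or> C i j (sigma k l) (gamma l k) = - C i j k l)
   \<and> (\<forall>i\<in>X. \<forall>j\<in>X. \<forall>k\<in>X. \<forall>l\<in>X. sol_r sigma gamma (k, l) = (k, l) \<longrightarrow>
        C (sigma i j) (gamma j i) k l = C i j k l \<or> C (sigma i j) (gamma j i) k l = - C i j k l)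
   \<and> (\<forall>i\<in>X. \<forall>j\<in>X. \<forall>k\<in>X. \<forall>l\<in>X.
        sol_r sigma gamma (i, j) = (i, j) \<and> sol_r sigma gamma (k, l) = (k, l) \<longrightarrow> C i j k l = 0)
   \<and> card ((\<lambda>x. {x, - x}) ` ({C i j k l | i j k l. i \<in> X \<and> j \<in> X \<and> k \<in> X \<and> l \<in> X} - {0}))
       = (n ^ 2) choose 2"
proof -
  let ?r = "sol_r sigma gamma"
  have rdef: "\<And>a b. ?r (a,b) = (sigma a b, gamma b a)" by (simp add: sol_r_def)
  have bijs: "\<And>x. x \<in> X \<Longrightarrow> bij_betw (sigma x) X X \<and> bij_betw (gamma x) X X"
    using sol unfolding nondeg_invol_solution_def X_def by blast
  have cl: "\<And>a b. a \<in> X \<Longrightarrow> b \<in> X \<Longrightarrow> sigma a b \<in> X \<and> gamma b a \<in> X"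
    using bijs bij_betw_apply by metis
  have inv: "\<And>a b. a \<in> X \<Longrightarrow> b \<in> X \<Longrightarrow> sigma (sigma a b) (gamma b a) = a \<and> gamma (gamma b a) (sigma a b) = b"
  proof -
    fix a b assume "a \<in> X" "b \<in> X"
    then have "?r (?r (a,b)) = (a,b)" using sol unfolding nondeg_invol_solution_def X_def by blast
    then show "sigma (sigma a b) (gamma b a) = a \<and> gamma (gamma b a) (sigma a b) = b" by (simp add: rdef)
  qed
  have finX: "finite X" unfolding X_def by simp
  define E :: "nat \<Rightarrow> nat \<Rightarrow> nat \<Rightarrow> nat \<Rightarrow> 'k free_alg" where
    "E a b c d = Poly_Mapping.single [(a,c),(b,d)] 1" for a b c d
  have TE: "\<And>a b c d. T a c \<cdot>\<^sub>F T b d = E a b c d" unfolding E_def by (rule T_mult)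
  have Cf: "C i j k l = E (sigma i j) (gamma j i) k l - E i j (sigma k l) (gamma l k)"
    if h: "i \<in> X" "j \<in> X" "k \<in> X" "l \<in> X" for i j k l
  proof -
    have s1: "(\<Sum>p\<in>{1..n}. \<Sum>q\<in>{1..n}. fscal (ccoef sigma gamma i j p q :: 'k) (T p k \<cdot>\<^sub>F T q l))
        = (\<Sum>p\<in>X. \<Sum>q\<in>X. if p = sigma i j \<and> q = gamma j i then E p q k l else 0)"
      unfolding X_def
      by (intro sum.cong refl) (simp add: T_mult E_def fscal_single ccoef_def)
    have s2: "(\<Sum>p\<in>{1..n}. \<Sum>q\<in>{1..n}. fscal (ccoef sigma gamma p q k l :: 'k) (T i p \<cdot>\<^sub>F T j q))
        = (\<Sum>p\<in>X. \<Sum>q\<in>X. if p = sigma k l \<and> q = gamma l k then E i j p q else 0)"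
    proof (unfold X_def, intro sum.cong refl)
      fix p q assume pq: "p \<in> {1..n}" "q \<in> {1..n}"
      have "(k = sigma p q \<and> l = gamma q p) \<longleftrightarrow> (p = sigma k l \<and> q = gamma l k)"
        using inv[of p q] inv[of k l] pq h unfolding X_def by auto
      then show "fscal (ccoef sigma gamma p q k l :: 'k) (T i p \<cdot>\<^sub>F T j q)
          = (if p = sigma k l \<and> q = gamma l k then E i j p q else 0)"
        by (simp add: T_mult E_def fscal_single ccoef_def)
    qed
    show ?thesis unfolding C_def FRT_C_def s1 s2
      using sum_sum_delta[OF finX finX, of "sigma i j" "gamma j i" "\<lambda>p q. E p q k l"]
        sum_sum_delta[OF finX finX, of "sigma k l" "gamma l k" "\<lambda>p q. E i j p q"] cl h by simp
  qed
  have c1: "\<forall>i\<in>X. \<forall>j\<in>X. \<forall>k\<in>X. \<forall>l\<in>X.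
        C i j k l = T (sigma i j) k \<cdot>\<^sub>F T (gamma j i) l - T i (sigma k l) \<cdot>\<^sub>F T j (gamma l k)"
    by (simp add: Cf TE)
  have c2: "\<forall>i\<in>X. \<forall>j\<in>X. \<forall>k\<in>X. \<forall>l\<in>X.
        C (sigma i j) (gamma j i) k l
          = T i k \<cdot>\<^sub>F T j l - T (sigma i j) (sigma k l) \<cdot>\<^sub>F T (gamma j i) (gamma l k)"
    by (simp add: Cf TE cl inv)
  have c3: "\<forall>i\<in>X. \<forall>j\<in>X. \<forall>k\<in>X. \<forall>l\<in>X.
        C (sigma i j) (gamma j i) (sigma k l) (gamma l k) = - C i j k l"
    by (simp add: Cf cl inv)
  have c4: "\<forall>i\<in>X. \<forall>j\<in>X. \<forall>k\<in>X. \<forall>l\<in>X.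
        C i j (sigma k l) (gamma l k) = - C (sigma i j) (gamma j i) k l"
    by (simp add: Cf cl inv)
  have c5: "\<forall>i\<in>X. \<forall>j\<in>X. \<forall>k\<in>X. \<forall>l\<in>X. sol_r sigma gamma (i, j) = (i, j) \<longrightarrow>
        C i j (sigma k l) (gamma l k) = C i j k l \<or> C i j (sigma k l) (gamma l k) = - C i j k l"
    by (simp add: Cf cl inv rdef)
  have c6: "\<forall>i\<in>X. \<forall>j\<in>X. \<forall>k\<in>X. \<forall>l\<in>X. sol_r sigma gamma (k, l) = (k, l) \<longrightarrow>
        C (sigma i j) (gamma j i) k l = C i j k l \<or> C (sigma i j) (gamma j i) k l = - C i j k l"
    by (simp add: Cf cl inv rdef)
  have c7: "\<forall>i\<in>X. \<forall>j\<in>X. \<forall>k\<in>X. \<forall>l\<in>X.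
        sol_r sigma gamma (i, j) = (i, j) \<and> sol_r sigma gamma (k, l) = (k, l) \<longrightarrow> C i j k l = 0"
    by (simp add: Cf cl inv rdef)
  define P where "P = X \<times> X"
  define R where "R m = (?r (fst m), ?r (snd m))" for m :: "(nat \<times> nat) \<times> (nat \<times> nat)"
  define W where "W m = [(fst (fst m), fst (snd m)), (snd (fst m), snd (snd m))]"
    for m :: "(nat \<times> nat) \<times> (nat \<times> nat)"
  define D where "D m = (Poly_Mapping.single (W m) 1 - Poly_Mapping.single (W (R m)) 1 :: 'k free_alg)" for m
  have rP: "\<And>p. p \<in> P \<Longrightarrow> ?r p \<in> P \<and> ?r (?r p) = p"
    unfolding P_def using cl inv rdef by auto
  have RR: "\<And>m. m \<in> P \<times> P \<Longrightarrow> R m \<in> P \<times> P \<and> R (R m) = m"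
    unfolding R_def using rP by auto
  have Winj: "\<And>m m'. W m = W m' \<Longrightarrow> m = m'"
    unfolding W_def by (auto simp: prod_eq_iff)
  have lookD: "\<And>m w. Poly_Mapping.lookup (D m) w = (if W m = w then 1 else 0) - (if W (R m) = w then 1 else 0)"
    unfolding D_def by (simp add: lookup_minus lookup_single)
  have Cset: "{C i j k l | i j k l. i \<in> X \<and> j \<in> X \<and> k \<in> X \<and> l \<in> X} = D ` (P \<times> P)"
  proof (intro equalityI subsetI)
    fix x assume "x \<in> {C i j k l | i j k l. i \<in> X \<and> j \<in> X \<and> k \<in> X \<and> l \<in> X}"
    then obtain i j k l where h: "i \<in> X" "j \<in> X" "k \<in> X" "l \<in> X" and x: "x = C i j k l" by blast
    have "x = D ((sigma i j, gamma j i), (k, l))"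
      unfolding x Cf[OF h] D_def R_def W_def E_def using h inv by (simp add: rdef)
    moreover have "((sigma i j, gamma j i), (k, l)) \<in> P \<times> P" using h cl unfolding P_def by auto
    ultimately show "x \<in> D ` (P \<times> P)" by blast
  next
    fix x assume "x \<in> D ` (P \<times> P)"
    then obtain a b c d where h: "a \<in> X" "b \<in> X" "c \<in> X" "d \<in> X" and x: "x = D ((a,b),(c,d))"
      unfolding P_def by auto
    have "x = C (sigma a b) (gamma b a) c d"
      unfolding x using Cf[of "sigma a b" "gamma b a" c d] h cl inv
      by (simp add: D_def R_def W_def E_def rdef)
    then show "x \<in> {C i j k l | i j k l. i \<in> X \<and> j \<in> X \<and> k \<in> X \<and> l \<in> X}"
      using h cl by blast
  qed
  have D0: "\<And>m. D m = 0 \<longleftrightarrow> R m = m"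
  proof
    fix m assume "D m = 0"
    then have "Poly_Mapping.lookup (D m) (W m) = 0" by simp
    then show "R m = m" unfolding lookD using Winj by (auto split: if_splits)
  qed (simp add: D_def)
  define Nn where "Nn = {m \<in> P \<times> P. R m \<noteq> m}"
  define N' where "N' = {m \<in> Nn. m < R m}"
  have S: "{C i j k l | i j k l. i \<in> X \<and> j \<in> X \<and> k \<in> X \<and> l \<in> X} - {0} = D ` Nn"
    unfolding Cset Nn_def using D0 by auto
  have DR: "\<And>m. m \<in> P \<times> P \<Longrightarrow> D (R m) = - D m"
    unfolding D_def using RR by simp
  have img: "(\<lambda>x. {x, - x}) ` D ` Nn = ((\<lambda>x. {x, - x}) \<circ> D) ` N'"
  proof (intro equalityI subsetI)
    fix y assume "y \<in> (\<lambda>x. {x, - x}) ` D ` Nn"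
    then obtain m where m: "m \<in> Nn" and y: "y = {D m, - D m}" by auto
    show "y \<in> ((\<lambda>x. {x, - x}) \<circ> D) ` N'"
    proof (cases "m < R m")
      case True then show ?thesis using m y unfolding N'_def by auto
    next
      case False
      with m have "R m < m" unfolding Nn_def by auto
      moreover have "R m \<in> Nn" using m RR unfolding Nn_def by auto
      ultimately have "R m \<in> N'" using m RR unfolding N'_def Nn_def by auto
      moreover have "{D (R m), - D (R m)} = y" using DR m y unfolding Nn_def by auto
      ultimately show ?thesis by force
    qed
  qed (auto simp: N'_def)
  have inj: "inj_on ((\<lambda>x. {x, - x}) \<circ> D) N'"
  proof (rule inj_onI)
    fix m m' assume m: "m \<in> N'" and m': "m' \<in> N'"
      and eq: "((\<lambda>x. {x, - x}) \<circ> D) m = ((\<lambda>x. {x, - x}) \<circ> D) m'"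
    have "D m' = D m \<or> D m' = - D m" using eq by (auto simp: doubleton_eq_iff)
    then have "Poly_Mapping.lookup (D m') (W m) \<noteq> 0"
    proof
      have "R m \<noteq> m" using m by (simp add: N'_def Nn_def)
      then have "W (R m) \<noteq> W m" using Winj[of "R m" m] by blast
      then have "Poly_Mapping.lookup (D m) (W m) = 1" by (simp add: lookD)
      then show "D m' = D m \<Longrightarrow> ?thesis" "D m' = - D m \<Longrightarrow> ?thesis" by (auto simp: lookup_uminus)
    qed
    then have "W m' = W m \<or> W (R m') = W m" unfolding lookD by (auto split: if_splits)
    then have "m' = m \<or> R m' = m" using Winj by blast
    then show "m = m'"
    proof
      assume "R m' = m"
      then have "R m = m'" using RR m' unfolding N'_def Nn_def by auto
      then show ?thesis using m m' \<open>R m' = m\<close> unfolding N'_def by auto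
    qed simp
  qed
  have cardX: "card X = n" unfolding X_def by simp
  define Fr where "Fr = {p \<in> P. ?r p = p}"
  have Fr_eq: "Fr = (\<lambda>x. (x, inv_into X (sigma x) x)) ` X"
  proof (intro equalityI subsetI)
    fix p assume "p \<in> Fr"
    then obtain a b where p: "p = (a,b)" "a \<in> X" "b \<in> X" "sigma a b = a"
      unfolding Fr_def P_def by (auto simp: rdef)
    have "inv_into X (sigma a) a = b"
      using p bijs[of a] by (metis bij_betw_def inv_into_f_f)
    then show "p \<in> (\<lambda>x. (x, inv_into X (sigma x) x)) ` X" using p by auto
  next
    fix p assume "p \<in> (\<lambda>x. (x, inv_into X (sigma x) x)) ` X"
    then obtain a where a: "a \<in> X" and p: "p = (a, inv_into X (sigma a) a)" by auto
    define b where "b = inv_into X (sigma a) a"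
    have bX: "b \<in> X" unfolding b_def using a bijs[of a]
      by (metis bij_betw_def inv_into_into)
    have sab: "sigma a b = a" unfolding b_def using a bijs[of a]
      by (metis bij_betw_def f_inv_into_f)
    have "sigma a (gamma b a) = sigma a b" using inv[OF a bX] sab by simp
    then have "gamma b a = b" using bijs[OF a] cl[OF a bX] bX
      by (metis bij_betw_def inj_onD)
    then show "p \<in> Fr" using p a bX sab unfolding Fr_def P_def b_def[symmetric] by (simp add: rdef)
  qed
  have cardFr: "card Fr = n"
    unfolding Fr_eq cardX[symmetric] by (rule card_image) (auto intro: inj_onI)
  have Nn_eq: "Nn = P \<times> P - Fr \<times> Fr"
    unfolding Nn_def Fr_def R_def by (auto simp: prod_eq_iff)
  have finP: "finite P" unfolding P_def using finX by simp
  have cardNn: "card Nn = n^4 - n^2"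
  proof -
    have "card Nn = card (P \<times> P) - card (Fr \<times> Fr)"
      unfolding Nn_eq by (rule card_Diff_subset) (auto simp: Fr_def finP intro: finite_subset)
    also have "\<dots> = n^4 - n^2"
      by (simp add: card_cartesian_product cardFr P_def cardX power2_eq_square power4_eq_xxxx)
    finally show ?thesis .
  qed
  have finN: "finite N'" unfolding N'_def Nn_def using finP by simp
  have split: "Nn = N' \<union> R ` N'"
  proof (intro equalityI subsetI)
    fix m assume m: "m \<in> Nn"
    show "m \<in> N' \<union> R ` N'"
    proof (cases "m < R m")
      case True then show ?thesis using m unfolding N'_def by auto
    next
      case False
      with m have "R m < m" unfolding Nn_def by auto
      then have "R m \<in> N'" using m RR unfolding N'_def Nn_def by auto
      moreover have "m = R (R m)" using m RR unfolding Nn_def by auto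
      ultimately show ?thesis by blast
    qed
  next
    fix m assume "m \<in> N' \<union> R ` N'"
    then show "m \<in> Nn" using RR unfolding N'_def Nn_def by auto
  qed
  have disj: "N' \<inter> R ` N' = {}"
  proof (rule ccontr)
    assume "N' \<inter> R ` N' \<noteq> {}"
    then obtain m where m: "m \<in> N'" "R m \<in> N'" by auto
    then have "R (R m) = m" using RR unfolding N'_def Nn_def by auto
    then show False using m unfolding N'_def by auto
  qed
  have injR: "inj_on R N'"
  proof (rule inj_onI)
    fix x y assume "x \<in> N'" "y \<in> N'" "R x = R y"
    then have "R (R x) = R (R y)" by simp
    moreover have "x \<in> P \<times> P" "y \<in> P \<times> P" using \<open>x \<in> N'\<close> \<open>y \<in> N'\<close> unfolding N'_def Nn_def by auto
    ultimately show "x = y" using RR by metis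
  qed
  have "card Nn = 2 * card N'"
    unfolding split using card_Un_disjoint[OF finN finite_imageI[OF finN] disj] card_image[OF injR]
    by simp
  then have cN: "2 * card N' = n^4 - n^2" using cardNn by simp
  have "(n^2) choose 2 = (n^4 - n^2) div 2"
    by (simp add: choose_two diff_mult_distrib2 power4_eq_xxxx power2_eq_square)
  then have c8: "card ((\<lambda>x. {x, - x}) ` ({C i j k l | i j k l. i \<in> X \<and> j \<in> X \<and> k \<in> X \<and> l \<in> X} - {0}))
       = (n ^ 2) choose 2"
    unfolding S img card_image[OF inj] using cN by simp
  show ?thesis using c1 c2 c3 c4 c5 c6 c7 c8 by blast
qed

end
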